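(* Every polite basis of $\mathscr O=\mathscr O(N)$ is biperfect.
   Context: Setting. Let $k$ be a field of characteristic $0$ and $G$ a split connected reductive group over $k$, with Borel $B$, maximal torus $T\subset B$, simple roots $\{\alpha_i\}_{i\in I}$, root lattice $Q$, $Q_\pm$ the submonoid generated by positive/negative roots. For $\lambda=\sum c_i\alpha_i$, $\operatorname{ht}\lambda=\sum c_i$. Let $N$ be the unipotent radical of $B$, $\mathfrak n$ its Lie algebra, $e_i$ a root vector of weight $\alpha_i$, $e_i^{(n)}=e_i^n/n!$. Let $\mathscr O=\mathscr O(N)=\bigoplus_{\lambda\in Q_-}\mathscr O_\lambda$ (grading from conjugation by $T$), coproduct $\Delta$. $N$ and $U(\mathfrak n)$ act on both sides: $(n\cdot f)(m)=f(mn)$, $(f\cdot n)(m)=f(nm)$; $\langle x,f\rangle=(x\cdot f)(1_N)$ identifies $\mathscr O$ with the graded dual bialgebra of $U(\mathfrak n)$. Let $\zeta_i\in\mathscr O_{-\alpha_i}$ with $\langle e_i,\zeta_i\rangle=1$. The involution $*$ of $\mathscr O$ is defined by $f^*(n)=(-1)^{\operatorname{ht}\lambda}f(n^{-1})$ for $f\in\mathscr O_\lambda$, extended linearly. Polite bases. For $\theta\in Q_{\mathbb R}^*$, $J_\theta(\lambda)=-(\operatorname{ht}\lambda,\theta(\lambda))$, $\Gamma_\theta=J_\theta(Q_-)$, $\mathscr O^\gamma=\bigoplus_{J_\theta(\lambda)=\gamma}\mathscr O_\lambda$; for $\Gamma_\theta$-homogeneous $a$, $L_\theta(a)$ is the set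 of $\beta$ with nonzero component of $\Delta(a)$ in $\mathscr O^\beta\otimes\mathscr O^{|a|-\beta}$, $R_\theta(a)=|a|-L_\theta(a)$. $\Pi'=\{(r,d): d<0\text{ or }(d=0,r\ge0)\}$, $\Pi''=\{(r,d): d>0\text{ or }(d=0,r\ge0)\}$, $\alpha\le'\beta$ iff $\alpha+\Pi'\subset\beta+\Pi'$, $\alpha\le''\beta$ iff $\alpha+\Pi''\subset\beta+\Pi''$. ${}^\theta F'_\alpha\mathscr O$ (resp. ${}^\theta F''_\beta\mathscr O$) is the span of homogeneous $a$ with $L_\theta(a)\subset\alpha+\Pi'$ (resp. $R_\theta(a)\subset\beta+\Pi''$), associated graded $\mathrm{gr}'$, $\mathrm{gr}''$. $\mathscr O_{[\le0]}={}^\theta F'_0\mathscr O$, $\mathscr O_{[>0]}=\bigoplus_\gamma({}^\theta F'_\gamma\mathscr O\cap\mathscr O^\gamma)$, $\mathscr O_{[\ge0]}={}^\theta F''_0\mathscr O$, $\mathscr O_{[<0]}=\bigoplus_\gamma({}^\theta F''_\gamma\mathscr O\cap\mathscr O^\gamma)$. The algebra isomorphisms $\overline\Delta':\mathrm{gr}'\mathscr O\to\mathscr O_{[>0]}\otimes\mathscr O_{[\le0]}$ and $\overline\Delta'':\mathrm{gr}''\mathscr O\to\mathscr O_{[\ge0]}\otimes\mathscr O_{[<0]}$ send the class of homogeneous $a$ in $\mathrm{gr}'_\alpha$ (resp. $\mathrm{gr}''_\beta$) to the component of $\Delta(a)$ in $\mathscr O^\alpha\otimes\mathscr O^{|a|-\alpha}$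 (resp. $\mathscr O^{|a|-\beta}\otimes\mathscr O^\beta$). A basis $\mathbf B$ of $\mathscr O$ is polite if (i) it consists of weight vectors; (ii) $\zeta_i^n\in\mathbf B$ for all $i,n$; (iii) for every $\theta,\gamma$, ${}^\theta F'_\gamma\mathscr O$ is spanned by $\mathbf B\cap{}^\theta F'_\gamma\mathscr O$ and $\overline\Delta'$ maps the induced basis of $\mathrm{gr}'\mathscr O$ onto the tensor product of the induced bases of $\mathscr O_{[>0]}$, $\mathscr O_{[\le0]}$; (iv) the analogous condition for $F''$ and $\overline\Delta''$. Perfect bases. For $i\in I$ and $f\in\mathscr O$, $\ell_i(f)$ is the smallest $n\ge0$ with $e_i^{n+1}\cdot f=0$. A basis $\mathbf B$ of weight vectors is perfect if for each $(i,n)\in I\times\mathbb N$, $b\mapsto e_i^{(n)}\cdot b$ defines an injective map $\{b\in\mathbf B:\ell_i(b)=n\}\to\{b\in\mathbf B: e_i\cdot b=0\}$. $\mathbf B$ is biperfect if both $\mathbf B$ and $\{b^*: b\in\mathbf B\}$ are perfect. *)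

theory Defs
  imports Complex_Main
begin

text \<open>
  U(n) is the free algebra on the letters e_i (i in I)
  modulo the Serre relations; a word w :: 'i list stands for the monomial e_{w_1}...e_{w_n}.
  An element f of O = O(N) (graded dual of U(n)) is represented by its values f w = <w, f>
  on words; these are exactly the finitely supported functions on words in I that vanish on
  the Serre ideal.
\<close>

definition cartan_finite_type :: "('i \<Rightarrow> 'i \<Rightarrow> int) \<Rightarrow> 'i set \<Rightarrow> bool" where
  "cartan_finite_type A I \<longleftrightarrow>
     (\<forall>i\<in>I. A i i = 2) \<and>
     (\<forall>i\<in>I. \<forall>j\<in>I. i \<noteq> j \<longrightarrow> A i j \<le> 0) \<and>
     (\<forall>i\<in>I. \<forall>j\<in>I. A i j = 0 \<longleftrightarrow> A j i = 0) \<and>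
     (\<exists>d :: 'i \<Rightarrow> real. (\<forall>i\<in>I. d i > 0) \<and>
        (\<forall>i\<in>I. \<forall>j\<in>I. d i * of_int (A i j) = d j * of_int (A j i)) \<and>
        (\<forall>x :: 'i \<Rightarrow> real. (\<exists>i\<in>I. x i \<noteq> 0) \<longrightarrow>
            (\<Sum>i\<in>I. \<Sum>j\<in>I. x i * d i * of_int (A i j) * x j) > 0))"

definition Ocar :: "('i \<Rightarrow> 'i \<Rightarrow> int) \<Rightarrow> 'i set \<Rightarrow> ('i list \<Rightarrow> 'k::field) set" where
  "Ocar A I = {f. (\<forall>w. f w \<noteq> 0 \<longrightarrow> set w \<subseteq> I) \<and> finite {w. f w \<noteq> 0} \<and>
     (\<forall>u v i j. i \<in> I \<longrightarrow> j \<in> I \<longrightarrow> i \<noteq> j \<longrightarrow>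
        (\<Sum>k\<le>nat (1 - A i j). (-1) ^ k * of_nat (nat (1 - A i j) choose k) *
            f (u @ replicate k i @ [j] @ replicate (nat (1 - A i j) - k) i @ v)) = 0)}"

definition lin_span :: "('a \<Rightarrow> 'k::field) set \<Rightarrow> ('a \<Rightarrow> 'k) set" where
  "lin_span S = {f. \<exists>F c. finite F \<and> F \<subseteq> S \<and> f = (\<lambda>w. \<Sum>s\<in>F. c s * s w)}"

definition lin_indep :: "('a \<Rightarrow> 'k::field) set \<Rightarrow> bool" where
  "lin_indep S \<longleftrightarrow> (\<forall>F c. finite F \<longrightarrow> F \<subseteq> S \<longrightarrow> (\<lambda>w. \<Sum>s\<in>F. c s * s w) = (\<lambda>w. 0)
        \<longrightarrow> (\<forall>s\<in>F. c s = 0))"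

definition is_basis_of :: "('a \<Rightarrow> 'k::field) set \<Rightarrow> ('a \<Rightarrow> 'k) set \<Rightarrow> bool" where
  "is_basis_of V B \<longleftrightarrow> B \<subseteq> V \<and> lin_indep B \<and> lin_span B = V"

text \<open>Weights: the word w has Q-weight -wt w, so f is in O_lambda iff all words in its support
  have wt = -lambda.\<close>
definition wt :: "'i list \<Rightarrow> 'i \<Rightarrow> nat" where
  "wt w = (\<lambda>i. length (filter ((=) i) w))"

definition weight_vector :: "('i list \<Rightarrow> 'k::field) \<Rightarrow> bool" where
  "weight_vector f \<longleftrightarrow> (\<exists>\<mu>. \<forall>w. f w \<noteq> 0 \<longrightarrow> wt w = \<mu>)"

text \<open>Shuffle product of O (dual to the coproduct of U(n), e_i primitive), unit, powers.\<close>
definition omult :: "('i list \<Rightarrow> 'k::field) \<Rightarrow> ('i list \<Rightarrow> 'k) \<Rightarrow> 'i list \<Rightarrow> 'k" where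
  "omult f g = (\<lambda>w. \<Sum>S\<in>Pow {0..<length w}. f (nths w S) * g (nths w ({0..<length w} - S)))"

definition oone :: "'i list \<Rightarrow> 'k::field" where
  "oone = (\<lambda>w. if w = [] then 1 else 0)"

definition opow :: "('i list \<Rightarrow> 'k::field) \<Rightarrow> nat \<Rightarrow> 'i list \<Rightarrow> 'k" where
  "opow f n = (omult f ^^ n) oone"

definition zeta :: "'i \<Rightarrow> 'i list \<Rightarrow> 'k::field" where
  "zeta i = (\<lambda>w. if w = [i] then 1 else 0)"

text \<open>Left action of e_i: <y, e_i . f> = <y e_i, f>; divided powers; l_i.\<close>
definition eact :: "'i \<Rightarrow> ('i list \<Rightarrow> 'k::field) \<Rightarrow> 'i list \<Rightarrow> 'k" where
  "eact i f = (\<lambda>w. f (w @ [i]))"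

definition edp :: "'i \<Rightarrow> nat \<Rightarrow> ('i list \<Rightarrow> 'k::field) \<Rightarrow> 'i list \<Rightarrow> 'k" where
  "edp i n f = (\<lambda>w. ((eact i ^^ n) f) w / of_nat (fact n))"

definition ell :: "'i \<Rightarrow> ('i list \<Rightarrow> 'k::field) \<Rightarrow> nat" where
  "ell i f = (LEAST n. (eact i ^^ (Suc n)) f = (\<lambda>w. 0))"

text \<open>The involution *: f*(n) = (-1)^{ht lambda} f(n^{-1}).  Dually the antipode of U(n) sends
  a word of length m to (-1)^m times the reversed word, and (-1)^{ht lambda} = (-1)^m on
  O_lambda, so f* w = f (rev w).\<close>
definition ostar :: "('i list \<Rightarrow> 'k::field) \<Rightarrow> 'i list \<Rightarrow> 'k" where
  "ostar f = (\<lambda>w. f (rev w))"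

definition perfect :: "('i \<Rightarrow> 'i \<Rightarrow> int) \<Rightarrow> 'i set \<Rightarrow> ('i list \<Rightarrow> 'k::field) set \<Rightarrow> bool" where
  "perfect A I B \<longleftrightarrow> is_basis_of (Ocar A I) B \<and> (\<forall>b\<in>B. weight_vector b) \<and>
     (\<forall>i\<in>I. \<forall>n. (\<forall>b\<in>B. ell i b = n \<longrightarrow> edp i n b \<in> B \<and> eact i (edp i n b) = (\<lambda>w. 0)) \<and>
                 inj_on (edp i n) {b\<in>B. ell i b = n})"

definition biperfect :: "('i \<Rightarrow> 'i \<Rightarrow> int) \<Rightarrow> 'i set \<Rightarrow> ('i list \<Rightarrow> 'k::field) set \<Rightarrow> bool" where
  "biperfect A I B \<longleftrightarrow> perfect A I B \<and> perfect A I (ostar ` B)"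

text \<open>The grading J_theta.  For a word w (weight lambda = -wt w) J_theta(lambda) = (ht(-lambda), theta(-lambda)).\<close>
definition Jw :: "('i \<Rightarrow> real) \<Rightarrow> 'i list \<Rightarrow> int \<times> real" where
  "Jw \<theta> w = (int (length w), sum_list (map \<theta> w))"

definition Gam :: "('i \<Rightarrow> real) \<Rightarrow> 'i set \<Rightarrow> (int \<times> real) set" where
  "Gam \<theta> I = {Jw \<theta> w | w. set w \<subseteq> I}"

definition Gam_hom :: "('i \<Rightarrow> real) \<Rightarrow> ('i list \<Rightarrow> 'k::field) \<Rightarrow> bool" where
  "Gam_hom \<theta> a \<longleftrightarrow> (\<exists>\<gamma>. \<forall>w. a w \<noteq> 0 \<longrightarrow> Jw \<theta> w = \<gamma>)"

definition Odeg :: "('i \<Rightarrow> 'i \<Rightarrow> int) \<Rightarrow> 'i set \<Rightarrow> ('i \<Rightarrow> real) \<Rightarrow> int \<times> real \<Rightarrow> ('i list \<Rightarrow> 'k::field) set" where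
  "Odeg A I \<theta> \<gamma> = {f \<in> Ocar A I. \<forall>w. f w \<noteq> 0 \<longrightarrow> Jw \<theta> w = \<gamma>}"

text \<open>L_theta(a): the beta with nonzero component of Delta(a) in O^beta (x) O^{|a|-beta};
  Delta(a)(u,v) = a(u v).  R_theta(a) = |a| - L_theta(a).\<close>
definition Lset :: "('i \<Rightarrow> real) \<Rightarrow> ('i list \<Rightarrow> 'k::field) \<Rightarrow> (int \<times> real) set" where
  "Lset \<theta> a = {Jw \<theta> u | u. \<exists>v. a (u @ v) \<noteq> 0}"

definition Rset :: "('i \<Rightarrow> real) \<Rightarrow> ('i list \<Rightarrow> 'k::field) \<Rightarrow> (int \<times> real) set" where
  "Rset \<theta> a = {Jw \<theta> v | v. \<exists>u. a (u @ v) \<noteq> 0}"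

definition Pi1 :: "(int \<times> real) set" where
  "Pi1 = {(r, d). d < 0 \<or> (d = 0 \<and> r \<ge> 0)}"

definition Pi2 :: "(int \<times> real) set" where
  "Pi2 = {(r, d). d > 0 \<or> (d = 0 \<and> r \<ge> 0)}"

definition shift :: "int \<times> real \<Rightarrow> (int \<times> real) set \<Rightarrow> (int \<times> real) set" where
  "shift \<alpha> P = {(fst \<alpha> + fst p, snd \<alpha> + snd p) | p. p \<in> P}"

definition le1 :: "int \<times> real \<Rightarrow> int \<times> real \<Rightarrow> bool" where
  "le1 \<alpha> \<beta> \<longleftrightarrow> shift \<alpha> Pi1 \<subseteq> shift \<beta> Pi1"

definition le2 :: "int \<times> real \<Rightarrow> int \<times> real \<Rightarrow> bool" where
  "le2 \<alpha> \<beta> \<longleftrightarrow> shift \<alpha> Pi2 \<subseteq> shift \<beta> Pi2"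

definition F1 :: "('i \<Rightarrow> 'i \<Rightarrow> int) \<Rightarrow> 'i set \<Rightarrow> ('i \<Rightarrow> real) \<Rightarrow> int \<times> real \<Rightarrow> ('i list \<Rightarrow> 'k::field) set" where
  "F1 A I \<theta> \<gamma> = lin_span {a \<in> Ocar A I. Gam_hom \<theta> a \<and> Lset \<theta> a \<subseteq> shift \<gamma> Pi1}"

definition F2 :: "('i \<Rightarrow> 'i \<Rightarrow> int) \<Rightarrow> 'i set \<Rightarrow> ('i \<Rightarrow> real) \<Rightarrow> int \<times> real \<Rightarrow> ('i list \<Rightarrow> 'k::field) set" where
  "F2 A I \<theta> \<gamma> = lin_span {a \<in> Ocar A I. Gam_hom \<theta> a \<and> Rset \<theta> a \<subseteq> shift \<gamma> Pi2}"

definition F1lt :: "('i \<Rightarrow> 'i \<Rightarrow> int) \<Rightarrow> 'i set \<Rightarrow> ('i \<Rightarrow> real) \<Rightarrow> int \<times> real \<Rightarrow> ('i list \<Rightarrow> 'k::field) set" where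
  "F1lt A I \<theta> \<gamma> = lin_span (\<Union>{F1 A I \<theta> \<beta> | \<beta>. \<beta> \<in> Gam \<theta> I \<and> le1 \<beta> \<gamma> \<and> \<beta> \<noteq> \<gamma>})"

definition F2lt :: "('i \<Rightarrow> 'i \<Rightarrow> int) \<Rightarrow> 'i set \<Rightarrow> ('i \<Rightarrow> real) \<Rightarrow> int \<times> real \<Rightarrow> ('i list \<Rightarrow> 'k::field) set" where
  "F2lt A I \<theta> \<gamma> = lin_span (\<Union>{F2 A I \<theta> \<beta> | \<beta>. \<beta> \<in> Gam \<theta> I \<and> le2 \<beta> \<gamma> \<and> \<beta> \<noteq> \<gamma>})"

definition Ole0 where "Ole0 A I \<theta> = F1 A I \<theta> (0, 0)"
definition Ogt0 where "Ogt0 A I \<theta> = lin_span (\<Union>{F1 A I \<theta> \<gamma> \<inter> Odeg A I \<theta> \<gamma> | \<gamma>. \<gamma> \<in> Gam \<theta> I})"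
definition Oge0 where "Oge0 A I \<theta> = F2 A I \<theta> (0, 0)"
definition Olt0 where "Olt0 A I \<theta> = lin_span (\<Union>{F2 A I \<theta> \<gamma> \<inter> Odeg A I \<theta> \<gamma> | \<gamma>. \<gamma> \<in> Gam \<theta> I})"

text \<open>Elements of O (x) O represented as functionals on pairs of words.\<close>
definition otensor :: "('i list \<Rightarrow> 'k::field) \<Rightarrow> ('i list \<Rightarrow> 'k) \<Rightarrow> 'i list \<times> 'i list \<Rightarrow> 'k" where
  "otensor f g = (\<lambda>(u, v). f u * g v)"

text \<open>Delta-bar' of the class of a in gr'_alpha: the component of Delta(a) in O^alpha (x) O^{|a|-alpha};
  Delta-bar'' of the class of a in gr''_beta: the component in O^{|a|-beta} (x) O^beta.\<close>
definition Dbar1 :: "('i \<Rightarrow> real) \<Rightarrow> int \<times> real \<Rightarrow> ('i list \<Rightarrow> 'k::field) \<Rightarrow> 'i list \<times> 'i list \<Rightarrow> 'k" where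
  "Dbar1 \<theta> \<alpha> a = (\<lambda>(u, v). if Jw \<theta> u = \<alpha> then a (u @ v) else 0)"

definition Dbar2 :: "('i \<Rightarrow> real) \<Rightarrow> int \<times> real \<Rightarrow> ('i list \<Rightarrow> 'k::field) \<Rightarrow> 'i list \<times> 'i list \<Rightarrow> 'k" where
  "Dbar2 \<theta> \<beta> a = (\<lambda>(u, v). if Jw \<theta> v = \<beta> then a (u @ v) else 0)"

definition polite :: "('i \<Rightarrow> 'i \<Rightarrow> int) \<Rightarrow> 'i set \<Rightarrow> ('i list \<Rightarrow> 'k::field) set \<Rightarrow> bool" where
  "polite A I B \<longleftrightarrow> is_basis_of (Ocar A I) B \<and>
     (\<forall>b\<in>B. weight_vector b) \<and>
     (\<forall>i\<in>I. \<forall>n. opow (zeta i) n \<in> B) \<and>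
     (\<forall>\<theta> :: 'i \<Rightarrow> real.
        (\<forall>\<gamma>\<in>Gam \<theta> I. F1 A I \<theta> \<gamma> = lin_span (B \<inter> F1 A I \<theta> \<gamma>)) \<and>
        {Dbar1 \<theta> \<alpha> b | \<alpha> b. \<alpha> \<in> Gam \<theta> I \<and> b \<in> B \<and> b \<in> F1 A I \<theta> \<alpha> \<and> b \<notin> F1lt A I \<theta> \<alpha>}
          = {otensor b1 b2 | b1 b2. b1 \<in> B \<inter> Ogt0 A I \<theta> \<and> b2 \<in> B \<inter> Ole0 A I \<theta>} \<and>
        (\<forall>\<gamma>\<in>Gam \<theta> I. F2 A I \<theta> \<gamma> = lin_span (B \<inter> F2 A I \<theta> \<gamma>)) \<and>
        {Dbar2 \<theta> \<beta> b | \<beta> b. \<beta> \<in> Gam \<theta> I \<and> b \<in> B \<and> b \<in> F2 A I \<theta> \<beta> \<and> b \<notin> F2lt A I \<theta> \<beta>}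
          = {otensor b1 b2 | b1 b2. b1 \<in> B \<inter> Oge0 A I \<theta> \<and> b2 \<in> B \<inter> Olt0 A I \<theta>})"

end

theory Submission
  imports Defs "HOL-Library.Multiset"
begin


lemma wt_Jw: assumes "wt w = wt w'" shows "Jw \<theta> w = Jw \<theta> w'"
proof -
  have m: "mset w = mset w'"
  proof (rule multiset_eqI)
    fix x show "count (mset w) x = count (mset w') x"
      using fun_cong[OF assms[unfolded wt_def], of x]
      by (metis length_replicate replicate_count_mset_eq_filter_eq)
  qed
  have "length w = length w'" using m by (metis size_mset)
  moreover have "sum_list (map \<theta> w) = sum_list (map \<theta> w')"
    using m by (metis mset_map sum_mset_sum_list)
  ultimately show ?thesis by (simp add: Jw_def)
qed

lemma wv_Gam_hom: "weight_vector b \<Longrightarrow> Gam_hom \<theta> b"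
  unfolding weight_vector_def Gam_hom_def by (metis wt_Jw)

lemma in_lin_span: "x \<in> S \<Longrightarrow> x \<in> lin_span S"
  unfolding lin_span_def
  apply (rule CollectI, rule exI[of _ "{x}"], rule exI[of _ "\<lambda>_. 1"]) by auto

lemma lin_span_vanish: assumes "\<forall>s\<in>S. s x = 0" "f \<in> lin_span S" shows "f x = 0"
  using assms unfolding lin_span_def by (auto intro!: sum.neutral)

lemma indep_nonzero: assumes "lin_indep B" "b \<in> B" shows "b \<noteq> (\<lambda>w. 0)"
proof
  assume "b = (\<lambda>w. 0)"
  then show False using assms(1)[unfolded lin_indep_def, rule_format, of "{b}" "\<lambda>_. 1"] assms(2) by auto
qed

lemma indep_diff: assumes "lin_indep B" "b \<in> B" "b' \<in> B" "b \<noteq> b'" "S \<subseteq> B" "b \<notin> S"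
  "(\<lambda>w. b w - b' w) \<in> lin_span S" shows False
proof -
  obtain F c where F: "finite F" "F \<subseteq> S" "(\<lambda>w. b w - b' w) = (\<lambda>w. \<Sum>s\<in>F. c s * s w)"
    using assms(7) unfolding lin_span_def by auto
  define G where "G = insert b (insert b' F)"
  define d where "d s = (if s = b then 1 else 0) - (if s = b' then 1 else 0) - (if s \<in> F then c s else 0)" for s
  have fG: "finite G" using F G_def by auto
  have "(\<lambda>w. \<Sum>s\<in>G. d s * s w) = (\<lambda>w. 0)"
  proof
    fix w
    have "(\<Sum>s\<in>G. d s * s w) = (\<Sum>s\<in>G. (if s = b then s w else 0)) - (\<Sum>s\<in>G. (if s = b' then s w else 0))
        - (\<Sum>s\<in>G. (if s \<in> F then c s * s w else 0))"
    proof -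
      have "\<And>s. d s * s w = (if s = b then s w else 0) - (if s = b' then s w else 0) - (if s \<in> F then c s * s w else 0)"
        unfolding d_def by (simp add: algebra_simps)
      then show ?thesis by (simp add: sum_subtractf)
    qed
    also have "\<dots> = b w - b' w - (\<Sum>s\<in>F. c s * s w)"
    proof -
      have "insert b (insert b' F) \<inter> F = F" by auto
      then show ?thesis using fG by (simp add: sum.If_cases G_def)
    qed
    also have "\<dots> = 0" using fun_cong[OF F(3), of w] by simp
    finally show "(\<Sum>s\<in>G. d s * s w) = 0" .
  qed
  moreover have "G \<subseteq> B" using F assms G_def by auto
  ultimately have "\<forall>s\<in>G. d s = 0" using assms(1) fG unfolding lin_indep_def by blast
  moreover have "d b = 1" using assms F unfolding d_def by auto
  ultimately show False unfolding G_def by simp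
qed

lemma eact_pow: "(eact i ^^ n) f = (\<lambda>w. f (w @ replicate n i))"
proof (induction n arbitrary: f)
  case 0 then show ?case by simp
next
  case (Suc n)
  have "(eact i ^^ Suc n) f = (eact i ^^ n) (eact i f)" by (simp add: funpow_Suc_right del: funpow.simps)
  also have "\<dots> = (\<lambda>w. f (w @ replicate n i @ [i]))" by (simp add: Suc eact_def)
  also have "\<dots> = (\<lambda>w. f (w @ replicate (Suc n) i))" by (simp add: replicate_append_same)
  finally show ?case .
qed



lemma nths_single: "p < length w \<Longrightarrow> nths w {p} = [w ! p]"
proof -
  assume p: "p < length w"
  have "{q. q < length w \<and> q \<in> {p}} = {p}" using p by auto
  then have "length (nths w {p}) = 1" by (simp add: length_nths)
  moreover have "set (nths w {p}) = {w ! p}" using p by (auto simp: set_nths)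
  ultimately show ?thesis
    by (metis (no_types, lifting) One_nat_def length_0_conv length_Suc_conv list.set(1) list.simps(15) singleton_insert_inj_eq' set_empty)
qed

lemma nths_is_single: assumes "S \<subseteq> {0..<length w}" "nths w S = [x]"
  shows "\<exists>p. S = {p} \<and> p < length w \<and> w ! p = x"
proof -
  have "{q. q < length w \<and> q \<in> S} = S" using assms(1) by auto
  then have "card S = 1" using arg_cong[OF assms(2), of length] by (simp add: length_nths)
  then obtain p where S: "S = {p}" by (auto simp: card_Suc_eq)
  then have p: "p < length w" using assms(1) by auto
  then show ?thesis using S assms(2) nths_single[OF p] by auto
qed

lemma omult_zeta: "omult (zeta i) g w = (\<Sum>p<length w. if w ! p = i then g (nths w ({0..<length w} - {p})) else 0)"
proof -
  let ?U = "{0..<length w}"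
  let ?F = "\<lambda>S. zeta i (nths w S) * g (nths w (?U - S))"
  have "omult (zeta i) g w = sum ?F (Pow ?U)" by (simp add: omult_def)
  also have "\<dots> = sum ?F ((\<lambda>p. {p}) ` ?U)"
  proof (rule sum.mono_neutral_right)
    show "\<forall>S\<in>Pow ?U - (\<lambda>p. {p}) ` ?U. ?F S = 0"
    proof
      fix S assume S: "S \<in> Pow ?U - (\<lambda>p. {p}) ` ?U"
      have "nths w S \<noteq> [i]"
      proof
        assume "nths w S = [i]"
        then obtain p where "S = {p}" "p < length w" using nths_is_single[of S w i] S by auto
        then show False using S by auto
      qed
      then show "?F S = 0" by (simp add: zeta_def)
    qed
  qed auto
  also have "\<dots> = sum (\<lambda>p. ?F {p}) ?U" by (subst sum.reindex) (auto simp: inj_on_def)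
  also have "\<dots> = (\<Sum>p<length w. if w ! p = i then g (nths w ({0..<length w} - {p})) else 0)"
    by (rule sum.cong) (auto simp: nths_single zeta_def)
  finally show ?thesis .
qed

lemma rep_char: assumes "p < length w"
  shows "(w ! p = i \<and> nths w ({0..<length w} - {p}) = replicate n i) \<longleftrightarrow> w = replicate (Suc n) i"
proof
  assume a: "w ! p = i \<and> nths w ({0..<length w} - {p}) = replicate n i"
  have "card ({q. q < length w \<and> q \<in> {0..<length w} - {p}}) = n"
    using arg_cong[OF conjunct2[OF a], of length] by (simp add: length_nths)
  moreover have "{q. q < length w \<and> q \<in> {0..<length w} - {p}} = {0..<length w} - {p}" by auto
  ultimately have "length w = Suc n" using assms by simp
  moreover have "\<forall>q<length w. w ! q = i"
  proof (intro allI impI)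
    fix q assume q: "q < length w"
    show "w ! q = i"
    proof (cases "q = p")
      case True then show ?thesis using a by simp
    next
      case False
      then have "w ! q \<in> set (nths w ({0..<length w} - {p}))" using q by (auto simp: set_nths)
      then show ?thesis using a by simp
    qed
  qed
  ultimately show "w = replicate (Suc n) i" by (metis in_set_conv_nth replicate_eqI)
next
  assume w: "w = replicate (Suc n) i"
  have "w ! p = i" using w assms by (metis length_replicate nth_replicate)
  moreover have "nths w ({0..<length w} - {p}) = replicate n i"
  proof (rule replicate_eqI)
    have "{q. q < length w \<and> q \<in> {0..<length w} - {p}} = {0..<length w} - {p}" by auto
    then show "length (nths w ({0..<length w} - {p})) = n" using w assms by (simp add: length_nths)
    show "\<And>y. y \<in> set (nths w ({0..<length w} - {p})) \<Longrightarrow> y = i"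
      using w by (metis in_set_nthsD in_set_replicate)
  qed
  ultimately show "w ! p = i \<and> nths w ({0..<length w} - {p}) = replicate n i" by simp
qed

lemma opow_zeta: "opow (zeta i) n = (\<lambda>w. if w = replicate n i then (of_nat (fact n) :: 'k::field) else 0)"
proof (induction n)
  case 0 then show ?case by (simp add: opow_def oone_def fun_eq_iff)
next
  case (Suc n)
  have os: "opow (zeta i) (Suc n) = omult (zeta i) (opow (zeta i) n)" by (simp add: opow_def)
  show ?case
  proof
    fix w :: "'a list"
    have "opow (zeta i) (Suc n) w = (\<Sum>p<length w. if w ! p = i then opow (zeta i) n (nths w ({0..<length w} - {p})) else (0::'k))"
      by (simp add: os omult_zeta)
    also have "\<dots> = (\<Sum>p<length w. if w = replicate (Suc n) i then of_nat (fact n) else 0)"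
    proof (rule sum.cong)
      fix p assume "p \<in> {..<length w}"
      then have p: "p < length w" by simp
      show "(if w ! p = i then opow (zeta i) n (nths w ({0..<length w} - {p})) else (0::'k)) =
        (if w = replicate (Suc n) i then of_nat (fact n) else 0)"
        unfolding Suc.IH using rep_char[OF p, of i n] by auto
    qed simp
    also have "\<dots> = (if w = replicate (Suc n) i then of_nat (fact (Suc n)) else (0::'k))"
      by (auto simp: algebra_simps)
    finally show "opow (zeta i) (Suc n) w = (if w = replicate (Suc n) i then of_nat (fact (Suc n)) else (0::'k))" .
  qed
qed



definition thR :: "nat \<Rightarrow> 'i \<Rightarrow> 'i \<Rightarrow> real" where
  "thR M i = (\<lambda>j. if j = i then -1 else real M)"

lemma Jw_thR: "Jw (thR M i) v = (int (length v),
   real M * real (length (filter (\<lambda>j. j \<noteq> i) v)) - real (length (filter (\<lambda>j. j = i) v)))"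
  by (induction v) (auto simp: Jw_def thR_def algebra_simps)

lemma rep_or_filter: "v = replicate (length v) i \<or> filter (\<lambda>j. j \<noteq> i) v \<noteq> []"
  by (metis (mono_tags, lifting) filter_empty_conv replicate_eqI)

lemma Jw_thR_rep: "Jw (thR M i) (replicate m i) = (int m, - real m)"
  by (simp add: Jw_thR)

lemma Jw_thR_pos: assumes "length v < M" "v \<noteq> replicate (length v) i"
  shows "snd (Jw (thR M i) v) > 0"
proof -
  have k: "length (filter (\<lambda>j. j \<noteq> i) v) \<ge> 1" using rep_or_filter[of v i] assms(2) by (cases "filter (\<lambda>j. j \<noteq> i) v") auto
  have m: "length (filter (\<lambda>j. j = i) v) < M" using assms(1) by (meson le_less_trans length_filter_le)
  have "real M * 1 \<le> real M * real (length (filter (\<lambda>j. j \<noteq> i) v))"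
    by (rule mult_left_mono) (use k in auto)
  then have h2: "real M \<le> real M * real (length (filter (\<lambda>j. j \<noteq> i) v))" by simp
  have m': "real (length (filter (\<lambda>j. j = i) v)) < real M" using m by simp
  show ?thesis unfolding Jw_thR snd_conv using h2 m' by linarith
qed

lemma Jw_thR_eq: "Jw (thR M i) v = (int n, - real n) \<longleftrightarrow> v = replicate n i"
proof
  assume a: "Jw (thR M i) v = (int n, - real n)"
  let ?k = "length (filter (\<lambda>j. j \<noteq> i) v)" and ?m = "length (filter (\<lambda>j. j = i) v)"
  have s: "?m + ?k = length v" using sum_length_filter_compl[of "\<lambda>j. j = i" v] by simp
  have l: "length v = n" and d: "real M * real ?k - real ?m = - real n" using a by (auto simp: Jw_thR)
  have "(real M + 1) * real ?k = 0" using d s l by (simp add: algebra_simps)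
  then have "?k = 0" by (smt (verit) mult_eq_0_iff of_nat_0_le_iff of_nat_eq_0_iff)
  then show "v = replicate n i" using rep_or_filter[of v i] l by auto
next
  assume "v = replicate n i" then show "Jw (thR M i) v = (int n, - real n)" by (simp add: Jw_thR_rep)
qed

lemma shift_mem: "x \<in> shift \<beta> P \<longleftrightarrow> (fst x - fst \<beta>, snd x - snd \<beta>) \<in> P"
  unfolding shift_def by (cases x; cases \<beta>) force

lemma supp_bound: assumes "finite {w. f w \<noteq> 0}" shows "\<exists>M. \<forall>w. f w \<noteq> 0 \<longrightarrow> length w < M"
proof -
  have "finite (length ` {w. f w \<noteq> 0})" using assms by simp
  then obtain M where "\<forall>x\<in>length ` {w. f w \<noteq> 0}. x < M" using finite_nat_set_iff_bounded by blast
  then show ?thesis by auto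
qed

lemma ell_props: assumes "finite {w. f w \<noteq> 0}"
  shows "\<And>w. f (w @ replicate (Suc (ell i f)) i) = 0"
    and "f \<noteq> (\<lambda>w. 0) \<Longrightarrow> \<exists>u. f (u @ replicate (ell i f) i) \<noteq> 0"
proof -
  obtain M where M: "\<forall>w. f w \<noteq> 0 \<longrightarrow> length w < M" using supp_bound[OF assms] by blast
  have ex: "(eact i ^^ Suc M) f = (\<lambda>w. 0)"
    unfolding eact_pow using M by fastforce
  have L: "(eact i ^^ Suc (ell i f)) f = (\<lambda>w. 0)"
    unfolding ell_def by (rule LeastI[of _ M], rule ex)
  show "\<And>w. f (w @ replicate (Suc (ell i f)) i) = 0" using fun_cong[OF L] unfolding eact_pow by simp
  assume nz: "f \<noteq> (\<lambda>w. 0)"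
  show "\<exists>u. f (u @ replicate (ell i f) i) \<noteq> 0"
  proof (cases "ell i f")
    case 0 then show ?thesis using nz by auto
  next
    case (Suc k)
    have "(eact i ^^ Suc k) f \<noteq> (\<lambda>w. 0)"
      using not_less_Least[of k "\<lambda>n. (eact i ^^ (Suc n)) f = (\<lambda>w. 0)"] Suc unfolding ell_def by simp
    then show ?thesis unfolding eact_pow Suc by auto
  qed
qed

lemma ell_le: assumes "finite {w. f w \<noteq> 0}" "f (u @ replicate m i) \<noteq> 0" shows "m \<le> ell i f"
proof (rule ccontr)
  assume "\<not> m \<le> ell i f"
  then have "m = (m - Suc (ell i f)) + Suc (ell i f)" by simp
  then have "replicate m i = replicate (m - Suc (ell i f)) i @ replicate (Suc (ell i f)) i"
    by (metis replicate_add)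
  then show False using ell_props(1)[OF assms(1), of "u @ replicate (m - Suc (ell i f)) i" i] assms(2) by simp
qed

lemma Ocar_finite: "f \<in> Ocar A I \<Longrightarrow> finite {w. f w \<noteq> 0}"
  by (simp add: Ocar_def)

lemma Ocar_diff: assumes "f \<in> Ocar A I" "g \<in> Ocar A I" shows "(\<lambda>w. f w - g w) \<in> Ocar A I"
proof -
  have "{w. f w - g w \<noteq> 0} \<subseteq> {w. f w \<noteq> 0} \<union> {w. g w \<noteq> 0}" by auto
  then have fin: "finite {w. f w - g w \<noteq> 0}" using assms by (auto simp: Ocar_def intro: finite_subset)
  have f: "\<forall>u v i j. i \<in> I \<longrightarrow> j \<in> I \<longrightarrow> i \<noteq> j \<longrightarrow>
        (\<Sum>k\<le>nat (1 - A i j). (-1) ^ k * of_nat (nat (1 - A i j) choose k) *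
            f (u @ replicate k i @ [j] @ replicate (nat (1 - A i j) - k) i @ v)) = 0"
    and g: "\<forall>u v i j. i \<in> I \<longrightarrow> j \<in> I \<longrightarrow> i \<noteq> j \<longrightarrow>
        (\<Sum>k\<le>nat (1 - A i j). (-1) ^ k * of_nat (nat (1 - A i j) choose k) *
            g (u @ replicate k i @ [j] @ replicate (nat (1 - A i j) - k) i @ v)) = 0"
    using assms unfolding Ocar_def by auto
  have s: "\<forall>w. f w - g w \<noteq> 0 \<longrightarrow> set w \<subseteq> I" using assms unfolding Ocar_def
    by (metis (mono_tags, lifting) CollectD diff_self diff_zero)
  have "\<forall>u v i j. i \<in> I \<longrightarrow> j \<in> I \<longrightarrow> i \<noteq> j \<longrightarrow>
        (\<Sum>k\<le>nat (1 - A i j). (-1) ^ k * of_nat (nat (1 - A i j) choose k) *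
            (f (u @ replicate k i @ [j] @ replicate (nat (1 - A i j) - k) i @ v) - g (u @ replicate k i @ [j] @ replicate (nat (1 - A i j) - k) i @ v))) = 0"
  proof (intro allI impI)
    fix u v i j assume ij: "i \<in> I" "j \<in> I" "i \<noteq> j"
    have "(\<Sum>k\<le>nat (1 - A i j). (-1) ^ k * of_nat (nat (1 - A i j) choose k) *
            (f (u @ replicate k i @ [j] @ replicate (nat (1 - A i j) - k) i @ v) - g (u @ replicate k i @ [j] @ replicate (nat (1 - A i j) - k) i @ v)))
       = (\<Sum>k\<le>nat (1 - A i j). (-1) ^ k * of_nat (nat (1 - A i j) choose k) *
            f (u @ replicate k i @ [j] @ replicate (nat (1 - A i j) - k) i @ v)) -
         (\<Sum>k\<le>nat (1 - A i j). (-1) ^ k * of_nat (nat (1 - A i j) choose k) *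
            g (u @ replicate k i @ [j] @ replicate (nat (1 - A i j) - k) i @ v))"
      by (simp add: right_diff_distrib sum_subtractf)
    also have "\<dots> = 0" using f g ij by simp
    finally show "(\<Sum>k\<le>nat (1 - A i j). (-1) ^ k * of_nat (nat (1 - A i j) choose k) *
            (f (u @ replicate k i @ [j] @ replicate (nat (1 - A i j) - k) i @ v) - g (u @ replicate k i @ [j] @ replicate (nat (1 - A i j) - k) i @ v))) = 0" .
  qed
  then show ?thesis using s fin unfolding Ocar_def by blast
qed

lemma edp_eq: "edp i n f u = f (u @ replicate n i) / of_nat (fact n)"
  by (simp add: edp_def eact_pow)



lemma polite_basic: assumes "polite A I B"
  shows "B \<subseteq> Ocar A I" "lin_indep B" "\<forall>b\<in>B. weight_vector b" "\<forall>i\<in>I. \<forall>n. opow (zeta i) n \<in> B"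
  using assms unfolding polite_def is_basis_of_def
  by (metis (no_types, lifting))+

lemma polite_th: assumes "polite A I B"
  shows "(\<forall>\<gamma>\<in>Gam \<theta> I. F1 A I \<theta> \<gamma> = lin_span (B \<inter> F1 A I \<theta> \<gamma>))"
    "{Dbar1 \<theta> \<alpha> b | \<alpha> b. \<alpha> \<in> Gam \<theta> I \<and> b \<in> B \<and> b \<in> F1 A I \<theta> \<alpha> \<and> b \<notin> F1lt A I \<theta> \<alpha>}
          = {otensor b1 b2 | b1 b2. b1 \<in> B \<inter> Ogt0 A I \<theta> \<and> b2 \<in> B \<inter> Ole0 A I \<theta>}"
    "(\<forall>\<gamma>\<in>Gam \<theta> I. F2 A I \<theta> \<gamma> = lin_span (B \<inter> F2 A I \<theta> \<gamma>))"
    "{Dbar2 \<theta> \<beta> b | \<beta> b. \<beta> \<in> Gam \<theta> I \<and> b \<in> B \<and> b \<in> F2 A I \<theta> \<beta> \<and> b \<notin> F2lt A I \<theta> \<beta>}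
          = {otensor b1 b2 | b1 b2. b1 \<in> B \<inter> Oge0 A I \<theta> \<and> b2 \<in> B \<inter> Olt0 A I \<theta>}"
  apply (insert assms, unfold polite_def, elim conjE, erule allE[of _ \<theta>], elim conjE, assumption)+
  done


lemma Gam_rep: "i \<in> I \<Longrightarrow> Jw \<theta> (replicate n i) \<in> Gam \<theta> I"
  unfolding Gam_def by auto

lemma shift_self: "\<beta> \<in> shift \<beta> Pi2" "\<beta> \<in> shift \<beta> Pi1"
  by (auto simp: shift_mem Pi2_def Pi1_def)

lemma right_main:
  fixes B :: "('i list \<Rightarrow> 'k::field_char_0) set"
  assumes pol: "polite A I B" and i: "i \<in> I" and b: "b \<in> B"
  shows "edp i (ell i b) b \<in> B"
proof -
  define n where "n = ell i b"
  have basis: "B \<subseteq> Ocar A I" "lin_indep B" and wvB: "\<forall>b\<in>B. weight_vector b"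
    and opB: "\<forall>i\<in>I. \<forall>n. opow (zeta i) n \<in> B"
    using polite_basic[OF pol] by auto
  have bO: "b \<in> Ocar A I" using basis b by auto
  have fin: "finite {w. b w \<noteq> 0}" using bO Ocar_finite by blast
  have nz: "b \<noteq> (\<lambda>w. 0)" using indep_nonzero basis b by blast
  obtain u0 where u0: "b (u0 @ replicate n i) \<noteq> 0" using ell_props(2)[OF fin nz] n_def by blast
  obtain M where M: "\<forall>w. b w \<noteq> 0 \<longrightarrow> length w < M" using supp_bound[OF fin] by blast
  define \<theta> where "\<theta> = thR M i"
  define \<beta> where "\<beta> = (int n, - real n)"
  have \<beta>J: "Jw \<theta> (replicate n i) = \<beta>" unfolding \<theta>_def \<beta>_def by (rule Jw_thR_rep)
  have \<beta>G: "\<beta> \<in> Gam \<theta> I" using Gam_rep[OF i, of \<theta> n] \<beta>J by simp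
  have R: "Rset \<theta> b \<subseteq> shift \<beta> Pi2"
  proof
    fix x assume "x \<in> Rset \<theta> b"
    then obtain u v where x: "x = Jw \<theta> v" and nzv: "b (u @ v) \<noteq> 0" unfolding Rset_def by auto
    have lv: "length v < M" using M nzv by fastforce
    show "x \<in> shift \<beta> Pi2"
    proof (cases "v = replicate (length v) i")
      case True
      then have le: "length v \<le> n" using ell_le[OF fin, of u "length v" i] nzv n_def by metis
      have "x = (int (length v), - real (length v))" using True x Jw_thR_rep \<theta>_def by metis
      then show ?thesis using le by (auto simp: shift_mem Pi2_def \<beta>_def)
    next
      case False
      have "snd x > 0" using Jw_thR_pos[OF lv False] x \<theta>_def by simp
      then show ?thesis by (auto simp: shift_mem Pi2_def \<beta>_def)
    qed
  qed
  have bF2: "b \<in> F2 A I \<theta> \<beta>" unfolding F2_def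
    by (rule in_lin_span) (use bO R wv_Gam_hom wvB b in auto)
  have van: "f (u0 @ replicate n i) = 0" if "f \<in> F2lt A I \<theta> \<beta>" for f
  proof -
    have "\<forall>s\<in>\<Union>{F2 A I \<theta> \<beta>' |\<beta>'. \<beta>' \<in> Gam \<theta> I \<and> le2 \<beta>' \<beta> \<and> \<beta>' \<noteq> \<beta>}. s (u0 @ replicate n i) = 0"
    proof
      fix s assume "s \<in> \<Union>{F2 A I \<theta> \<beta>' |\<beta>'. \<beta>' \<in> Gam \<theta> I \<and> le2 \<beta>' \<beta> \<and> \<beta>' \<noteq> \<beta>}"
      then obtain \<beta>' where s: "s \<in> F2 A I \<theta> \<beta>'" and le: "le2 \<beta>' \<beta>" and ne: "\<beta>' \<noteq> \<beta>" by auto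
      have "\<forall>a \<in> {a \<in> Ocar A I. Gam_hom \<theta> a \<and> Rset \<theta> a \<subseteq> shift \<beta>' Pi2}. a (u0 @ replicate n i) = 0"
      proof
        fix a assume a: "a \<in> {a \<in> Ocar A I. Gam_hom \<theta> a \<and> Rset \<theta> a \<subseteq> shift \<beta>' Pi2}"
        show "a (u0 @ replicate n i) = 0"
        proof (rule ccontr)
          assume "a (u0 @ replicate n i) \<noteq> 0"
          then have "\<beta> \<in> Rset \<theta> a" unfolding Rset_def using \<beta>J by force
          then have 1: "\<beta> \<in> shift \<beta>' Pi2" using a by auto
          have 2: "\<beta>' \<in> shift \<beta> Pi2" using le shift_self(1)[of \<beta>'] unfolding le2_def by auto
          show False using 1 2 ne by (cases \<beta>; cases \<beta>') (auto simp: shift_mem Pi2_def)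
        qed
      qed
      then show "s (u0 @ replicate n i) = 0" by (rule lin_span_vanish) (use s in \<open>simp only: F2_def\<close>)
    qed
    then show ?thesis by (rule lin_span_vanish) (use that in \<open>simp only: F2lt_def\<close>)
  qed
  have bnlt: "b \<notin> F2lt A I \<theta> \<beta>" using van u0 by blast
  have m: "Dbar2 \<theta> \<beta> b \<in> {Dbar2 \<theta> \<beta> b |\<beta> b. \<beta> \<in> Gam \<theta> I \<and> b \<in> B \<and> b \<in> F2 A I \<theta> \<beta> \<and> b \<notin> F2lt A I \<theta> \<beta>}"
    apply (rule CollectI, rule exI[of _ \<beta>], rule exI[of _ b])
    using \<beta>G b bF2 bnlt by simp
  have "Dbar2 \<theta> \<beta> b \<in> {otensor b1 b2 |b1 b2. b1 \<in> B \<inter> Oge0 A I \<theta> \<and> b2 \<in> B \<inter> Olt0 A I \<theta>}"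
    using m unfolding polite_th(4)[OF pol] by assumption
  then have "\<exists>b1 b2. Dbar2 \<theta> \<beta> b = otensor b1 b2 \<and> (b1 \<in> B \<inter> Oge0 A I \<theta> \<and> b2 \<in> B \<inter> Olt0 A I \<theta>)"
    by (simp only: mem_Collect_eq)
  then obtain b1 b2 where b1: "b1 \<in> B" and b2: "b2 \<in> B" and D: "Dbar2 \<theta> \<beta> b = otensor b1 b2"
    by (elim exE conjE IntE)
  have eq: "b1 u * b2 v = (if v = replicate n i then b (u @ v) else 0)" for u v
    using fun_cong[OF D, of "(u,v)"] unfolding Dbar2_def otensor_def \<theta>_def \<beta>_def Jw_thR_eq by simp
  define c where "c = b2 (replicate n i)"
  have e0: "b1 u0 * c = b (u0 @ replicate n i)" using eq[of u0 "replicate n i"] unfolding c_def by simp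
  have c: "c \<noteq> 0" and b1u0: "b1 u0 \<noteq> 0" using e0 u0 by auto
  have b2w: "b2 w = (if w = replicate n i then c else 0)" for w
  proof (cases "w = replicate n i")
    case True then show ?thesis unfolding c_def by simp
  next
    case False
    then have "b1 u0 * b2 w = 0" using eq[of u0 w] by simp
    then show ?thesis using b1u0 False by simp
  qed
  have pw: "opow (zeta i) n w = (if w = replicate n i then of_nat (fact n) else 0)" for w
    by (simp add: opow_zeta)
  have b2op: "b2 = opow (zeta i) n"
  proof (rule ccontr)
    let ?p = "opow (zeta i) n"
    assume ne: "b2 \<noteq> ?p"
    have pB: "?p \<in> B" using opB i by blast
    define cf where "cf s = (if s = b2 then of_nat (fact n) else - c)" for s
    have cf1: "cf b2 = of_nat (fact n)" by (simp add: cf_def)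
    have cf2: "cf ?p = - c" using ne by (simp add: cf_def)
    have eqn: "(\<lambda>w. \<Sum>s\<in>{b2, ?p}. cf s * s w) = (\<lambda>w. 0)"
    proof
      fix w
      have "(\<Sum>s\<in>{b2, ?p}. cf s * s w) = cf b2 * b2 w + (\<Sum>s\<in>{?p}. cf s * s w)"
        by (rule sum.insert) (use ne in auto)
      also have "\<dots> = of_nat (fact n) * b2 w - c * ?p w" by (simp add: cf1 cf2)
      also have "\<dots> = 0" by (simp add: b2w pw)
      finally show "(\<Sum>s\<in>{b2, ?p}. cf s * s w) = 0" .
    qed
    have fin2: "finite {b2, ?p}" by simp
    have sub2: "{b2, ?p} \<subseteq> B" using pB b2 by simp
    have "cf b2 = 0" by (rule basis(2)[unfolded lin_indep_def, rule_format, OF fin2 sub2 eqn]) simp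
    then show False using cf1 by simp
  qed
  have cfact: "c = of_nat (fact n)" unfolding c_def b2op pw by simp
  have "b1 = edp i n b"
  proof
    fix u
    have "b1 u * b2 (replicate n i) = b (u @ replicate n i)" using eq[of u "replicate n i"] by simp
    then have "b1 u * of_nat (fact n) = b (u @ replicate n i)" using cfact unfolding c_def by simp
    then show "b1 u = edp i n b u" unfolding edp_eq by (simp add: eq_divide_eq)
  qed
  then show ?thesis using b1 n_def by simp
qed



lemma right_inj:
  fixes B :: "('i list \<Rightarrow> 'k::field_char_0) set"
  assumes pol: "polite A I B" and i: "i \<in> I" and b: "b \<in> B" and b': "b' \<in> B"
    and el: "ell i b' = ell i b" and ed: "edp i (ell i b) b = edp i (ell i b') b'"
  shows "b = b'"
proof (rule ccontr)
  assume ne: "b \<noteq> b'"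
  define n where "n = ell i b"
  have el': "ell i b' = n" using el n_def by simp
  have basis: "B \<subseteq> Ocar A I" "lin_indep B" and wvB: "\<forall>b\<in>B. weight_vector b"
    using polite_basic[OF pol] by auto
  have bO: "b \<in> Ocar A I" and b'O: "b' \<in> Ocar A I" using basis b b' by auto
  have fin: "finite {w. b w \<noteq> 0}" using bO Ocar_finite by blast
  have fin': "finite {w. b' w \<noteq> 0}" using b'O Ocar_finite by blast
  have nz: "b \<noteq> (\<lambda>w. 0)" using indep_nonzero basis b by blast
  have same: "b (u @ replicate n i) = b' (u @ replicate n i)" for u
  proof -
    have "edp i n b u = edp i n b' u" using ed el' n_def by simp
    then show ?thesis unfolding edp_eq by simp
  qed
  have n0: "n \<noteq> 0"
  proof
    assume "n = 0"
    then have "b = b'" using same by (simp add: fun_eq_iff)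
    then show False using ne by simp
  qed
  obtain u0 where u0: "b (u0 @ replicate n i) \<noteq> 0" using ell_props(2)[OF fin nz] n_def by blast
  obtain M1 where M1: "\<forall>w. b w \<noteq> 0 \<longrightarrow> length w < M1" using supp_bound[OF fin] by blast
  obtain M2 where M2: "\<forall>w. b' w \<noteq> 0 \<longrightarrow> length w < M2" using supp_bound[OF fin'] by blast
  define M where "M = max M1 M2"
  have Mb: "length w < M" if "b w \<noteq> 0 \<or> b' w \<noteq> 0" for w
    using that M1 M2 unfolding M_def by fastforce
  define \<theta> where "\<theta> = thR M i"
  define \<beta> where "\<beta> = (int (n - 1), - real (n - 1))"
  have \<beta>J: "Jw \<theta> (replicate (n - 1) i) = \<beta>" unfolding \<theta>_def \<beta>_def by (rule Jw_thR_rep)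
  have \<beta>G: "\<beta> \<in> Gam \<theta> I" using Gam_rep[OF i, of \<theta> "n - 1"] \<beta>J by simp
  define d where "d = (\<lambda>w. b w - b' w)"
  have dO: "d \<in> Ocar A I" unfolding d_def by (rule Ocar_diff) (use bO b'O in auto)
  obtain \<mu> where \<mu>: "\<forall>w. b w \<noteq> 0 \<longrightarrow> wt w = \<mu>" using wvB b unfolding weight_vector_def by blast
  obtain \<mu>' where \<mu>': "\<forall>w. b' w \<noteq> 0 \<longrightarrow> wt w = \<mu>'" using wvB b' unfolding weight_vector_def by blast
  have u0': "b' (u0 @ replicate n i) \<noteq> 0" using u0 same by simp
  have wt0: "wt (u0 @ replicate n i) = \<mu>" by (rule \<mu>[rule_format, OF u0])
  have wt0': "wt (u0 @ replicate n i) = \<mu>'" by (rule \<mu>'[rule_format, OF u0'])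
  have mm: "\<mu> = \<mu>'" using wt0 wt0' by simp
  have dG: "Gam_hom \<theta> d"
    unfolding Gam_hom_def
  proof (rule exI[of _ "Jw \<theta> (u0 @ replicate n i)"], intro allI impI)
    fix w assume "d w \<noteq> 0"
    then have "b w \<noteq> 0 \<or> b' w \<noteq> 0" unfolding d_def by auto
    then have "wt w = wt (u0 @ replicate n i)" using \<mu> \<mu>' mm wt0 by auto
    then show "Jw \<theta> w = Jw \<theta> (u0 @ replicate n i)" by (rule wt_Jw)
  qed
  have R: "Rset \<theta> d \<subseteq> shift \<beta> Pi2"
  proof
    fix x assume "x \<in> Rset \<theta> d"
    then obtain u v where x: "x = Jw \<theta> v" and nzv: "d (u @ v) \<noteq> 0" unfolding Rset_def by auto
    have or: "b (u @ v) \<noteq> 0 \<or> b' (u @ v) \<noteq> 0" using nzv d_def by auto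
    have lv: "length v < M" using Mb[OF or] by simp
    show "x \<in> shift \<beta> Pi2"
    proof (cases "v = replicate (length v) i")
      case True
      obtain m where vm: "v = replicate m i" using True by blast
      have lvm: "length v = m" using vm by simp
      have or2: "b (u @ replicate m i) \<noteq> 0 \<or> b' (u @ replicate m i) \<noteq> 0"
        using or unfolding vm .
      have "m \<le> n" using or2 ell_le[OF fin, of u m i] ell_le[OF fin', of u m i] n_def el' by auto
      then have le: "length v \<le> n" using lvm by simp
      have "length v \<noteq> n"
      proof
        assume "length v = n"
        then have "v = replicate n i" using vm lvm by simp
        then have "d (u @ v) = 0" using same unfolding d_def by simp
        then show False using nzv by simp
      qed
      then have le2: "length v \<le> n - 1" using le by simp
      have x2: "x = (int (length v), - real (length v))" unfolding x vm \<theta>_def Jw_thR_rep by simp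
      have r1: "real (length v) \<le> real (n - 1)" using le2 by simp
      have "length v = n - 1 \<or> length v < n - 1" using le2 by auto
      then show ?thesis using r1 le2 unfolding x2 by (auto simp: shift_mem Pi2_def \<beta>_def)
    next
      case False
      have "snd x > 0" using Jw_thR_pos[OF lv False] x \<theta>_def by simp
      moreover have "real (n - 1) \<ge> 0" by simp
      ultimately show ?thesis by (auto simp: shift_mem Pi2_def \<beta>_def)
    qed
  qed
  have dF2: "d \<in> F2 A I \<theta> \<beta>" unfolding F2_def by (rule in_lin_span) (use dO dG R in simp)
  have span: "F2 A I \<theta> \<beta> = lin_span (B \<inter> F2 A I \<theta> \<beta>)" by (rule bspec[OF polite_th(3)[OF pol] \<beta>G])
  have bn: "b \<notin> F2 A I \<theta> \<beta>"
  proof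
    assume bF: "b \<in> F2 A I \<theta> \<beta>"
    have "\<forall>a \<in> {a \<in> Ocar A I. Gam_hom \<theta> a \<and> Rset \<theta> a \<subseteq> shift \<beta> Pi2}. a (u0 @ replicate n i) = 0"
    proof
      fix a assume a: "a \<in> {a \<in> Ocar A I. Gam_hom \<theta> a \<and> Rset \<theta> a \<subseteq> shift \<beta> Pi2}"
      show "a (u0 @ replicate n i) = 0"
      proof (rule ccontr)
        assume "a (u0 @ replicate n i) \<noteq> 0"
        then have "Jw \<theta> (replicate n i) \<in> Rset \<theta> a" unfolding Rset_def by blast
        then have "(int n, - real n) \<in> Rset \<theta> a" unfolding \<theta>_def Jw_thR_rep .
        then have "(int n, - real n) \<in> shift \<beta> Pi2" using a by blast
        moreover have "real (n - 1) = real n - 1" "int (n - 1) = int n - 1" using n0 by auto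
        ultimately show False by (auto simp: shift_mem Pi2_def \<beta>_def)
      qed
    qed
    then have "b (u0 @ replicate n i) = 0" by (rule lin_span_vanish) (use bF in \<open>simp only: F2_def\<close>)
    then show False using u0 by simp
  qed
  have "(\<lambda>w. b w - b' w) \<in> lin_span (B \<inter> F2 A I \<theta> \<beta>)" using dF2 span d_def by simp
  then show False by (rule indep_diff[OF basis(2) b b' ne, rotated 2]) (use bn in auto)
qed



lemma sum_atMost_rev: "(\<Sum>k\<le>N. (g :: nat \<Rightarrow> 'a::comm_monoid_add) k) = (\<Sum>k\<le>N. g (N - k))"
  using sum.atLeastAtMost_rev[of g 0 N] by (simp add: atLeast0AtMost)

lemma ostar_ostar[simp]: "ostar (ostar f) = f"
  by (simp add: ostar_def)

lemma ostar_apply: "ostar f w = f (rev w)"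
  by (simp add: ostar_def)

lemma ostar_inj: "inj ostar"
  by (metis injI ostar_ostar)

lemma ostar_fin: "finite {w. f w \<noteq> 0} \<Longrightarrow> finite {w. ostar f w \<noteq> 0}"
proof -
  assume a: "finite {w. f w \<noteq> 0}"
  have "{w. ostar f w \<noteq> 0} = rev ` {w. f w \<noteq> 0}"
    by (auto simp: ostar_def image_iff) (metis rev_rev_ident)
  then show ?thesis using a by simp
qed

lemma ostar_Ocar: fixes f :: "'i list \<Rightarrow> 'k::field" assumes "f \<in> Ocar A I" shows "ostar f \<in> Ocar A I"
proof -
  have s: "\<forall>w. ostar f w \<noteq> 0 \<longrightarrow> set w \<subseteq> I" using assms unfolding Ocar_def ostar_def by fastforce
  have fin: "finite {w. ostar f w \<noteq> 0}" using ostar_fin Ocar_finite[OF assms] by blast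
  have S: "\<forall>u v i j. i \<in> I \<longrightarrow> j \<in> I \<longrightarrow> i \<noteq> j \<longrightarrow>
        (\<Sum>k\<le>nat (1 - A i j). (-1) ^ k * of_nat (nat (1 - A i j) choose k) *
            f (u @ replicate k i @ [j] @ replicate (nat (1 - A i j) - k) i @ v)) = 0"
    using assms unfolding Ocar_def by blast
  have "\<forall>u v i j. i \<in> I \<longrightarrow> j \<in> I \<longrightarrow> i \<noteq> j \<longrightarrow>
        (\<Sum>k\<le>nat (1 - A i j). (-1) ^ k * of_nat (nat (1 - A i j) choose k) *
            ostar f (u @ replicate k i @ [j] @ replicate (nat (1 - A i j) - k) i @ v)) = 0"
  proof (intro allI impI)
    fix u v i j assume ij: "i \<in> I" "j \<in> I" "i \<noteq> j"
    define N where "N = nat (1 - A i j)"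
    define g where "g k = (-1) ^ k * of_nat (N choose k) * f (rev v @ replicate k i @ [j] @ replicate (N - k) i @ rev u)" for k
    have "(\<Sum>k\<le>N. (-1) ^ k * of_nat (N choose k) *
            ostar f (u @ replicate k i @ [j] @ replicate (N - k) i @ v))
        = (\<Sum>k\<le>N. (-1) ^ k * of_nat (N choose k) *
            f (rev v @ replicate (N - k) i @ [j] @ replicate k i @ rev u))"
      by (simp add: ostar_def)
    also have "\<dots> = (\<Sum>k\<le>N. (-1) ^ (N - k) * of_nat (N choose (N - k)) *
            f (rev v @ replicate (N - (N - k)) i @ [j] @ replicate (N - k) i @ rev u))"
      by (rule sum_atMost_rev)
    also have "\<dots> = (\<Sum>k\<le>N. (-1) ^ N * g k)"
    proof (rule sum.cong)
      fix k assume "k \<in> {..N}"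
      then have k: "k \<le> N" by simp
      have p: "((-1) ^ (N - k) :: 'k) = (-1) ^ N * (-1) ^ k"
      proof -
        have "((-1) ^ N :: 'k) = (-1) ^ (N - k) * (-1) ^ k" using k by (metis le_add_diff_inverse2 power_add)
        then have "((-1) ^ N :: 'k) * (-1) ^ k = (-1) ^ (N - k) * ((-1) ^ k * (-1) ^ k)" by (simp add: algebra_simps)
        also have "\<dots> = (-1) ^ (N - k)" by (simp add: power_add[symmetric] power_even_eq[symmetric] mult_2[symmetric])
        finally show ?thesis by simp
      qed
      show "(-1) ^ (N - k) * of_nat (N choose (N - k)) *
            f (rev v @ replicate (N - (N - k)) i @ [j] @ replicate (N - k) i @ rev u) = (-1) ^ N * g k"
        using k unfolding g_def p by (simp add: binomial_symmetric[OF k, symmetric])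
    qed simp
    also have "\<dots> = (-1) ^ N * sum g {..N}" by (simp add: sum_distrib_left)
    also have "sum g {..N} = 0" unfolding g_def N_def using S ij by blast
    finally show "(\<Sum>k\<le>nat (1 - A i j). (-1) ^ k * of_nat (nat (1 - A i j) choose k) *
            ostar f (u @ replicate k i @ [j] @ replicate (nat (1 - A i j) - k) i @ v)) = 0"
      unfolding N_def by simp
  qed
  then show ?thesis using s fin unfolding Ocar_def by blast
qed

lemma lin_span_ostar: "lin_span (ostar ` S) = ostar ` lin_span S"
proof
  show "lin_span (ostar ` S) \<subseteq> ostar ` lin_span S"
  proof
    fix f assume "f \<in> lin_span (ostar ` S)"
    then obtain F c where F: "finite F" "F \<subseteq> ostar ` S" "f = (\<lambda>w. \<Sum>s\<in>F. c s * s w)"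
      unfolding lin_span_def by blast
    define G where "G = ostar ` F"
    have "ostar f = (\<lambda>w. \<Sum>s\<in>G. (c \<circ> ostar) s * s w)"
      unfolding G_def F(3) by (simp add: sum.reindex[OF inj_on_subset[OF ostar_inj]] ostar_apply fun_eq_iff)
    moreover have "finite G" "G \<subseteq> S" using F unfolding G_def by auto
    ultimately have "ostar f \<in> lin_span S" unfolding lin_span_def by blast
    then show "f \<in> ostar ` lin_span S" by (metis image_eqI ostar_ostar)
  qed
  show "ostar ` lin_span S \<subseteq> lin_span (ostar ` S)"
  proof
    fix f assume "f \<in> ostar ` lin_span S"
    then obtain g where g: "g \<in> lin_span S" "f = ostar g" by blast
    then obtain F c where F: "finite F" "F \<subseteq> S" "g = (\<lambda>w. \<Sum>s\<in>F. c s * s w)"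
      unfolding lin_span_def by blast
    define G where "G = ostar ` F"
    have "f = (\<lambda>w. \<Sum>s\<in>G. (c \<circ> ostar) s * s w)"
      unfolding G_def g(2) F(3) by (simp add: sum.reindex[OF inj_on_subset[OF ostar_inj]] ostar_apply fun_eq_iff)
    moreover have "finite G" "G \<subseteq> ostar ` S" using F unfolding G_def by auto
    ultimately show "f \<in> lin_span (ostar ` S)" unfolding lin_span_def by blast
  qed
qed

lemma lin_indep_ostar: assumes "lin_indep S" shows "lin_indep (ostar ` S)"
  unfolding lin_indep_def
proof (intro allI impI)
  fix F c assume F: "finite F" "F \<subseteq> ostar ` S" "(\<lambda>w. \<Sum>s\<in>F. c s * s w) = (\<lambda>w. 0)"
  define G where "G = ostar ` F"
  have "(\<lambda>w. \<Sum>s\<in>G. (c \<circ> ostar) s * s w) = (\<lambda>w. 0)"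
  proof
    fix w
    have "(\<Sum>s\<in>G. (c \<circ> ostar) s * s w) = (\<Sum>s\<in>F. c s * s (rev w))"
      unfolding G_def by (simp add: sum.reindex[OF inj_on_subset[OF ostar_inj]] ostar_apply)
    also have "\<dots> = 0" using fun_cong[OF F(3), of "rev w"] by simp
    finally show "(\<Sum>s\<in>G. (c \<circ> ostar) s * s w) = 0" .
  qed
  moreover have "finite G" "G \<subseteq> S" using F unfolding G_def by auto
  ultimately have "\<forall>s\<in>G. (c \<circ> ostar) s = 0" using assms unfolding lin_indep_def by blast
  then show "\<forall>s\<in>F. c s = 0" unfolding G_def by simp
qed

lemma wt_rev: "wt (rev w) = wt w"
  by (simp add: wt_def rev_filter[symmetric])

lemma wv_ostar: "weight_vector f \<Longrightarrow> weight_vector (ostar f)"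
  unfolding weight_vector_def ostar_def by (metis wt_rev)

definition thL :: "nat \<Rightarrow> 'i \<Rightarrow> 'i \<Rightarrow> real" where
  "thL M i = (\<lambda>j. if j = i then 1 else - real M)"

lemma Jw_thL_R: "Jw (thL M i) v = (fst (Jw (thR M i) v), - snd (Jw (thR M i) v))"
  by (induction v) (auto simp: Jw_def thL_def thR_def)

lemma Jw_thL_rep: "Jw (thL M i) (replicate m i) = (int m, real m)"
  by (simp add: Jw_thL_R Jw_thR_rep)

lemma Jw_thL_neg: assumes "length v < M" "v \<noteq> replicate (length v) i"
  shows "snd (Jw (thL M i) v) < 0"
  using Jw_thR_pos[OF assms] by (simp add: Jw_thL_R)

lemma Jw_thL_eq: "Jw (thL M i) v = (int n, real n) \<longleftrightarrow> v = replicate n i"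
proof -
  have "Jw (thL M i) v = (int n, real n) \<longleftrightarrow> Jw (thR M i) v = (int n, - real n)"
    by (cases "Jw (thR M i) v") (auto simp: Jw_thL_R)
  then show ?thesis using Jw_thR_eq by simp
qed

lemma ostar_app: "ostar f (w @ replicate m i) = f (replicate m i @ rev w)"
  by (simp add: ostar_def)



lemma ostar_nz: assumes "b \<noteq> (\<lambda>w. 0)" shows "ostar b \<noteq> (\<lambda>w. 0)"
proof
  assume "ostar b = (\<lambda>w. 0)"
  then have "b = ostar (\<lambda>w. 0)" by (metis ostar_ostar)
  then show False using assms by (simp add: ostar_def)
qed

lemma left_main:
  fixes B :: "('i list \<Rightarrow> 'k::field_char_0) set"
  assumes pol: "polite A I B" and i: "i \<in> I" and b: "b \<in> B"
  shows "edp i (ell i (ostar b)) (ostar b) \<in> ostar ` B"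
proof -
  define n where "n = ell i (ostar b)"
  have basis: "B \<subseteq> Ocar A I" "lin_indep B" and wvB: "\<forall>b\<in>B. weight_vector b"
    and opB: "\<forall>i\<in>I. \<forall>n. opow (zeta i) n \<in> B"
    using polite_basic[OF pol] by auto
  have bO: "b \<in> Ocar A I" using basis b by auto
  have fin: "finite {w. b w \<noteq> 0}" using bO Ocar_finite by blast
  have fins: "finite {w. ostar b w \<noteq> 0}" using ostar_fin[OF fin] .
  have nz: "b \<noteq> (\<lambda>w. 0)" using indep_nonzero basis b by blast
  obtain u0 where "ostar b (u0 @ replicate n i) \<noteq> 0" using ell_props(2)[OF fins ostar_nz[OF nz]] n_def by blast
  then have v0: "b (replicate n i @ rev u0) \<noteq> 0" by (simp add: ostar_app)
  define v0 where "v0 = rev u0"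
  have v0: "b (replicate n i @ v0) \<noteq> 0" using v0 v0_def by simp
  have lel: "m \<le> n" if "b (replicate m i @ v) \<noteq> 0" for m v
  proof -
    have "ostar b (rev v @ replicate m i) \<noteq> 0" using that by (simp add: ostar_app)
    then show ?thesis using ell_le[OF fins] n_def by blast
  qed
  obtain M where M: "\<forall>w. b w \<noteq> 0 \<longrightarrow> length w < M" using supp_bound[OF fin] by blast
  define \<theta> where "\<theta> = thL M i"
  define \<alpha> where "\<alpha> = (int n, real n)"
  have \<alpha>J: "Jw \<theta> (replicate n i) = \<alpha>" unfolding \<theta>_def \<alpha>_def by (rule Jw_thL_rep)
  have \<alpha>G: "\<alpha> \<in> Gam \<theta> I" using Gam_rep[OF i, of \<theta> n] \<alpha>J by simp
  have L: "Lset \<theta> b \<subseteq> shift \<alpha> Pi1"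
  proof
    fix x assume "x \<in> Lset \<theta> b"
    then obtain u v where x: "x = Jw \<theta> u" and nzv: "b (u @ v) \<noteq> 0" unfolding Lset_def by auto
    have lu: "length u < M" using M nzv by fastforce
    show "x \<in> shift \<alpha> Pi1"
    proof (cases "u = replicate (length u) i")
      case True
      obtain m where um: "u = replicate m i" using True by blast
      have le: "m \<le> n" using lel nzv um by blast
      have "x = (int m, real m)" unfolding x um \<theta>_def Jw_thL_rep by simp
      then show ?thesis using le by (auto simp: shift_mem Pi1_def \<alpha>_def)
    next
      case False
      have "snd x < 0" using Jw_thL_neg[OF lu False] x \<theta>_def by simp
      then show ?thesis by (auto simp: shift_mem Pi1_def \<alpha>_def)
    qed
  qed
  have bF1: "b \<in> F1 A I \<theta> \<alpha>" unfolding F1_def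
    by (rule in_lin_span) (use bO L wv_Gam_hom wvB b in auto)
  have van: "f (replicate n i @ v0) = 0" if "f \<in> F1lt A I \<theta> \<alpha>" for f
  proof -
    have "\<forall>s\<in>\<Union>{F1 A I \<theta> \<beta>' |\<beta>'. \<beta>' \<in> Gam \<theta> I \<and> le1 \<beta>' \<alpha> \<and> \<beta>' \<noteq> \<alpha>}. s (replicate n i @ v0) = 0"
    proof
      fix s assume "s \<in> \<Union>{F1 A I \<theta> \<beta>' |\<beta>'. \<beta>' \<in> Gam \<theta> I \<and> le1 \<beta>' \<alpha> \<and> \<beta>' \<noteq> \<alpha>}"
      then obtain \<beta>' where s: "s \<in> F1 A I \<theta> \<beta>'" and le: "le1 \<beta>' \<alpha>" and ne: "\<beta>' \<noteq> \<alpha>" by auto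
      have "\<forall>a \<in> {a \<in> Ocar A I. Gam_hom \<theta> a \<and> Lset \<theta> a \<subseteq> shift \<beta>' Pi1}. a (replicate n i @ v0) = 0"
      proof
        fix a assume a: "a \<in> {a \<in> Ocar A I. Gam_hom \<theta> a \<and> Lset \<theta> a \<subseteq> shift \<beta>' Pi1}"
        show "a (replicate n i @ v0) = 0"
        proof (rule ccontr)
          assume "a (replicate n i @ v0) \<noteq> 0"
          then have "\<alpha> \<in> Lset \<theta> a" unfolding Lset_def using \<alpha>J by force
          then have 1: "\<alpha> \<in> shift \<beta>' Pi1" using a by auto
          have 2: "\<beta>' \<in> shift \<alpha> Pi1" using le shift_self(2)[of \<beta>'] unfolding le1_def by auto
          show False using 1 2 ne by (cases \<alpha>; cases \<beta>') (auto simp: shift_mem Pi1_def)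
        qed
      qed
      then show "s (replicate n i @ v0) = 0" by (rule lin_span_vanish) (use s in \<open>simp only: F1_def\<close>)
    qed
    then show ?thesis by (rule lin_span_vanish) (use that in \<open>simp only: F1lt_def\<close>)
  qed
  have bnlt: "b \<notin> F1lt A I \<theta> \<alpha>" using van v0 by blast
  have m: "Dbar1 \<theta> \<alpha> b \<in> {Dbar1 \<theta> \<alpha> b |\<alpha> b. \<alpha> \<in> Gam \<theta> I \<and> b \<in> B \<and> b \<in> F1 A I \<theta> \<alpha> \<and> b \<notin> F1lt A I \<theta> \<alpha>}"
    apply (rule CollectI, rule exI[of _ \<alpha>], rule exI[of _ b])
    using \<alpha>G b bF1 bnlt by simp
  have "Dbar1 \<theta> \<alpha> b \<in> {otensor b1 b2 |b1 b2. b1 \<in> B \<inter> Ogt0 A I \<theta> \<and> b2 \<in> B \<inter> Ole0 A I \<theta>}"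
    using m unfolding polite_th(2)[OF pol] by assumption
  then have "\<exists>b1 b2. Dbar1 \<theta> \<alpha> b = otensor b1 b2 \<and> (b1 \<in> B \<inter> Ogt0 A I \<theta> \<and> b2 \<in> B \<inter> Ole0 A I \<theta>)"
    by (simp only: mem_Collect_eq)
  then obtain b1 b2 where b1: "b1 \<in> B" and b2: "b2 \<in> B" and D: "Dbar1 \<theta> \<alpha> b = otensor b1 b2"
    by (elim exE conjE IntE)
  have eq: "b1 u * b2 v = (if u = replicate n i then b (u @ v) else 0)" for u v
    using fun_cong[OF D, of "(u,v)"] unfolding Dbar1_def otensor_def \<theta>_def \<alpha>_def Jw_thL_eq by simp
  define c where "c = b1 (replicate n i)"
  have e0: "c * b2 v0 = b (replicate n i @ v0)" using eq[of "replicate n i" v0] unfolding c_def by simp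
  have c: "c \<noteq> 0" and b2v0: "b2 v0 \<noteq> 0" using e0 v0 by auto
  have b1w: "b1 w = (if w = replicate n i then c else 0)" for w
  proof (cases "w = replicate n i")
    case True then show ?thesis unfolding c_def by simp
  next
    case False
    then have "b1 w * b2 v0 = 0" using eq[of w v0] by simp
    then show ?thesis using b2v0 False by simp
  qed
  have pw: "opow (zeta i) n w = (if w = replicate n i then of_nat (fact n) else 0)" for w
    by (simp add: opow_zeta)
  have b1op: "b1 = opow (zeta i) n"
  proof (rule ccontr)
    let ?p = "opow (zeta i) n"
    assume ne: "b1 \<noteq> ?p"
    have pB: "?p \<in> B" using opB i by blast
    define cf where "cf s = (if s = b1 then of_nat (fact n) else - c)" for s
    have cf1: "cf b1 = of_nat (fact n)" by (simp add: cf_def)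
    have cf2: "cf ?p = - c" using ne by (simp add: cf_def)
    have eqn: "(\<lambda>w. \<Sum>s\<in>{b1, ?p}. cf s * s w) = (\<lambda>w. 0)"
    proof
      fix w
      have "(\<Sum>s\<in>{b1, ?p}. cf s * s w) = cf b1 * b1 w + (\<Sum>s\<in>{?p}. cf s * s w)"
        by (rule sum.insert) (use ne in auto)
      also have "\<dots> = of_nat (fact n) * b1 w - c * ?p w" by (simp add: cf1 cf2)
      also have "\<dots> = 0" by (simp add: b1w pw)
      finally show "(\<Sum>s\<in>{b1, ?p}. cf s * s w) = 0" .
    qed
    have fin2: "finite {b1, ?p}" by simp
    have sub2: "{b1, ?p} \<subseteq> B" using pB b1 by simp
    have "cf b1 = 0" by (rule basis(2)[unfolded lin_indep_def, rule_format, OF fin2 sub2 eqn]) simp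
    then show False using cf1 by simp
  qed
  have cfact: "c = of_nat (fact n)" unfolding c_def b1op pw by simp
  have "edp i n (ostar b) = ostar b2"
  proof
    fix w
    have "b1 (replicate n i) * b2 (rev w) = b (replicate n i @ rev w)" using eq[of "replicate n i" "rev w"] by simp
    then have "of_nat (fact n) * b2 (rev w) = b (replicate n i @ rev w)" using cfact unfolding c_def by simp
    then have h: "b (replicate n i @ rev w) = of_nat (fact n) * b2 (rev w)" by simp
    show "edp i n (ostar b) w = ostar b2 w" unfolding edp_eq ostar_app ostar_apply using h by simp
  qed
  then show ?thesis using b2 n_def by simp
qed

lemma left_inj:
  fixes B :: "('i list \<Rightarrow> 'k::field_char_0) set"
  assumes pol: "polite A I B" and i: "i \<in> I" and b: "b \<in> B" and b': "b' \<in> B"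
    and el: "ell i (ostar b') = ell i (ostar b)"
    and ed: "edp i (ell i (ostar b)) (ostar b) = edp i (ell i (ostar b')) (ostar b')"
  shows "b = b'"
proof (rule ccontr)
  assume ne: "b \<noteq> b'"
  define n where "n = ell i (ostar b)"
  have el': "ell i (ostar b') = n" using el n_def by simp
  have basis: "B \<subseteq> Ocar A I" "lin_indep B" and wvB: "\<forall>b\<in>B. weight_vector b"
    using polite_basic[OF pol] by auto
  have bO: "b \<in> Ocar A I" and b'O: "b' \<in> Ocar A I" using basis b b' by auto
  have fin: "finite {w. b w \<noteq> 0}" using bO Ocar_finite by blast
  have fin': "finite {w. b' w \<noteq> 0}" using b'O Ocar_finite by blast
  have fins: "finite {w. ostar b w \<noteq> 0}" using ostar_fin[OF fin] .
  have fins': "finite {w. ostar b' w \<noteq> 0}" using ostar_fin[OF fin'] .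
  have nz: "b \<noteq> (\<lambda>w. 0)" using indep_nonzero basis b by blast
  have same: "b (replicate n i @ v) = b' (replicate n i @ v)" for v
  proof -
    have "edp i n (ostar b) (rev v) = edp i n (ostar b') (rev v)" using ed el' n_def by simp
    then show ?thesis unfolding edp_eq ostar_app by simp
  qed
  have n0: "n \<noteq> 0"
  proof
    assume "n = 0"
    then have "b = b'" using same by (simp add: fun_eq_iff)
    then show False using ne by simp
  qed
  obtain u0 where "ostar b (u0 @ replicate n i) \<noteq> 0" using ell_props(2)[OF fins ostar_nz[OF nz]] n_def by blast
  then have v0: "b (replicate n i @ rev u0) \<noteq> 0" by (simp add: ostar_app)
  define v0 where "v0 = rev u0"
  have v0: "b (replicate n i @ v0) \<noteq> 0" using v0 v0_def by simp
  have lel: "m \<le> n" if "b (replicate m i @ v) \<noteq> 0" for m v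
  proof -
    have "ostar b (rev v @ replicate m i) \<noteq> 0" using that by (simp add: ostar_app)
    then show ?thesis using ell_le[OF fins] n_def by blast
  qed
  have lel': "m \<le> n" if "b' (replicate m i @ v) \<noteq> 0" for m v
  proof -
    have "ostar b' (rev v @ replicate m i) \<noteq> 0" using that by (simp add: ostar_app)
    then show ?thesis using ell_le[OF fins'] el' by blast
  qed
  obtain M1 where M1: "\<forall>w. b w \<noteq> 0 \<longrightarrow> length w < M1" using supp_bound[OF fin] by blast
  obtain M2 where M2: "\<forall>w. b' w \<noteq> 0 \<longrightarrow> length w < M2" using supp_bound[OF fin'] by blast
  define M where "M = max M1 M2"
  have Mb: "length w < M" if "b w \<noteq> 0 \<or> b' w \<noteq> 0" for w
    using that M1 M2 unfolding M_def by fastforce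
  define \<theta> where "\<theta> = thL M i"
  define \<alpha> where "\<alpha> = (int (n - 1), real (n - 1))"
  have \<alpha>J: "Jw \<theta> (replicate (n - 1) i) = \<alpha>" unfolding \<theta>_def \<alpha>_def by (rule Jw_thL_rep)
  have \<alpha>G: "\<alpha> \<in> Gam \<theta> I" using Gam_rep[OF i, of \<theta> "n - 1"] \<alpha>J by simp
  define d where "d = (\<lambda>w. b w - b' w)"
  have dO: "d \<in> Ocar A I" unfolding d_def by (rule Ocar_diff) (use bO b'O in auto)
  obtain \<mu> where \<mu>: "\<forall>w. b w \<noteq> 0 \<longrightarrow> wt w = \<mu>" using wvB b unfolding weight_vector_def by blast
  obtain \<mu>' where \<mu>': "\<forall>w. b' w \<noteq> 0 \<longrightarrow> wt w = \<mu>'" using wvB b' unfolding weight_vector_def by blast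
  have v0': "b' (replicate n i @ v0) \<noteq> 0" using v0 same by simp
  have wt0: "wt (replicate n i @ v0) = \<mu>" by (rule \<mu>[rule_format, OF v0])
  have wt0': "wt (replicate n i @ v0) = \<mu>'" by (rule \<mu>'[rule_format, OF v0'])
  have mm: "\<mu> = \<mu>'" using wt0 wt0' by simp
  have dG: "Gam_hom \<theta> d"
    unfolding Gam_hom_def
  proof (rule exI[of _ "Jw \<theta> (replicate n i @ v0)"], intro allI impI)
    fix w assume "d w \<noteq> 0"
    then have "b w \<noteq> 0 \<or> b' w \<noteq> 0" unfolding d_def by auto
    then have "wt w = wt (replicate n i @ v0)" using \<mu> \<mu>' mm wt0 by auto
    then show "Jw \<theta> w = Jw \<theta> (replicate n i @ v0)" by (rule wt_Jw)
  qed
  have L: "Lset \<theta> d \<subseteq> shift \<alpha> Pi1"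
  proof
    fix x assume "x \<in> Lset \<theta> d"
    then obtain u v where x: "x = Jw \<theta> u" and nzv: "d (u @ v) \<noteq> 0" unfolding Lset_def by auto
    have or: "b (u @ v) \<noteq> 0 \<or> b' (u @ v) \<noteq> 0" using nzv d_def by auto
    have lu: "length u < M" using Mb[OF or] by simp
    show "x \<in> shift \<alpha> Pi1"
    proof (cases "u = replicate (length u) i")
      case True
      obtain m where um: "u = replicate m i" using True by blast
      have or2: "b (replicate m i @ v) \<noteq> 0 \<or> b' (replicate m i @ v) \<noteq> 0"
        using or unfolding um .
      have le: "m \<le> n" using or2 lel lel' by blast
      have "m \<noteq> n"
      proof
        assume "m = n"
        then have "d (u @ v) = 0" using same unfolding d_def um by simp
        then show False using nzv by simp
      qed
      then have le2: "m \<le> n - 1" using le by simp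
      have x2: "x = (int m, real m)" unfolding x um \<theta>_def Jw_thL_rep by simp
      have r1: "real m \<le> real (n - 1)" using le2 by simp
      have "m = n - 1 \<or> m < n - 1" using le2 by auto
      then show ?thesis using r1 le2 unfolding x2 by (auto simp: shift_mem Pi1_def \<alpha>_def)
    next
      case False
      have "snd x < 0" using Jw_thL_neg[OF lu False] x \<theta>_def by simp
      moreover have "real (n - 1) \<ge> 0" by simp
      ultimately show ?thesis by (auto simp: shift_mem Pi1_def \<alpha>_def)
    qed
  qed
  have dF1: "d \<in> F1 A I \<theta> \<alpha>" unfolding F1_def by (rule in_lin_span) (use dO dG L in simp)
  have span: "F1 A I \<theta> \<alpha> = lin_span (B \<inter> F1 A I \<theta> \<alpha>)" by (rule bspec[OF polite_th(1)[OF pol] \<alpha>G])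
  have bn: "b \<notin> F1 A I \<theta> \<alpha>"
  proof
    assume bF: "b \<in> F1 A I \<theta> \<alpha>"
    have "\<forall>a \<in> {a \<in> Ocar A I. Gam_hom \<theta> a \<and> Lset \<theta> a \<subseteq> shift \<alpha> Pi1}. a (replicate n i @ v0) = 0"
    proof
      fix a assume a: "a \<in> {a \<in> Ocar A I. Gam_hom \<theta> a \<and> Lset \<theta> a \<subseteq> shift \<alpha> Pi1}"
      show "a (replicate n i @ v0) = 0"
      proof (rule ccontr)
        assume "a (replicate n i @ v0) \<noteq> 0"
        then have "Jw \<theta> (replicate n i) \<in> Lset \<theta> a" unfolding Lset_def by blast
        then have "(int n, real n) \<in> Lset \<theta> a" unfolding \<theta>_def Jw_thL_rep .
        then have "(int n, real n) \<in> shift \<alpha> Pi1" using a by blast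
        moreover have "real (n - 1) = real n - 1" "int (n - 1) = int n - 1" using n0 by auto
        ultimately show False by (auto simp: shift_mem Pi1_def \<alpha>_def)
      qed
    qed
    then have "b (replicate n i @ v0) = 0" by (rule lin_span_vanish) (use bF in \<open>simp only: F1_def\<close>)
    then show False using v0 by simp
  qed
  have "(\<lambda>w. b w - b' w) \<in> lin_span (B \<inter> F1 A I \<theta> \<alpha>)" using dF1 span d_def by simp
  then show False by (rule indep_diff[OF basis(2) b b' ne, rotated 2]) (use bn in auto)
qed



lemma eact_edp_zero: assumes "finite {w. f w \<noteq> 0}" shows "eact i (edp i (ell i f) f) = (\<lambda>w. 0)"
proof
  fix w
  have "eact i (edp i (ell i f) f) w = f ((w @ [i]) @ replicate (ell i f) i) / of_nat (fact (ell i f))"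
    by (simp add: eact_def edp_eq)
  also have "(w @ [i]) @ replicate (ell i f) i = w @ replicate (Suc (ell i f)) i" by simp
  also have "f \<dots> = 0" by (rule ell_props(1)[OF assms])
  finally show "eact i (edp i (ell i f) f) w = 0" by simp
qed

theorem proposition3p9:
  fixes A :: "'i \<Rightarrow> 'i \<Rightarrow> int" and I :: "'i set" and B :: "('i list \<Rightarrow> 'k::field_char_0) set"
  assumes "finite I" and "cartan_finite_type A I" and "polite A I B"
  shows "biperfect A I B"
proof -
  note pol = assms(3)
  have basis: "B \<subseteq> Ocar A I" "lin_indep B" and wvB: "\<forall>b\<in>B. weight_vector b"
    using polite_basic[OF pol] by auto
  have isb: "is_basis_of (Ocar A I) B" using pol unfolding polite_def by (elim conjE)
  have P1: "perfect A I B"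
    unfolding perfect_def
  proof (intro conjI)
    show "is_basis_of (Ocar A I) B" by (rule isb)
    show "\<forall>b\<in>B. weight_vector b" using wvB by blast
    show "\<forall>i\<in>I. \<forall>n. (\<forall>b\<in>B. ell i b = n \<longrightarrow> edp i n b \<in> B \<and> eact i (edp i n b) = (\<lambda>w. 0)) \<and>
                 inj_on (edp i n) {b\<in>B. ell i b = n}"
    proof (intro ballI allI, rule conjI)
    fix i n assume i: "i \<in> I"
    show "\<forall>b\<in>B. ell i b = n \<longrightarrow> edp i n b \<in> B \<and> eact i (edp i n b) = (\<lambda>w. 0)"
    proof (intro ballI impI conjI)
      fix b assume b: "b \<in> B" and n: "ell i b = n"
      show "edp i n b \<in> B" using right_main[OF pol i b] n by simp
      have fb: "finite {w. b w \<noteq> 0}" using basis b Ocar_finite by blast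
      show "eact i (edp i n b) = (\<lambda>w. 0)" using eact_edp_zero[OF fb, of i] n by simp
    qed
    show "inj_on (edp i n) {b \<in> B. ell i b = n}"
    proof (rule inj_onI)
      fix b b' assume b: "b \<in> {b \<in> B. ell i b = n}" and b': "b' \<in> {b \<in> B. ell i b = n}"
        and e: "edp i n b = edp i n b'"
      show "b = b'" by (rule right_inj[OF pol i]) (use b b' e in auto)
    qed
    qed
  qed
  have OO: "ostar ` Ocar A I = Ocar A I"
  proof
    show "ostar ` Ocar A I \<subseteq> Ocar A I" using ostar_Ocar by blast
    show "Ocar A I \<subseteq> ostar ` Ocar A I"
    proof
      fix f assume "f \<in> Ocar A I"
      then have "ostar f \<in> Ocar A I" by (rule ostar_Ocar)
      then show "f \<in> ostar ` Ocar A I" by (metis image_eqI ostar_ostar)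
    qed
  qed
  have isb2: "is_basis_of (Ocar A I) (ostar ` B)"
    unfolding is_basis_of_def
  proof (intro conjI)
    show "ostar ` B \<subseteq> Ocar A I" using basis ostar_Ocar by blast
    show "lin_indep (ostar ` B)" by (rule lin_indep_ostar[OF basis(2)])
    have "lin_span B = Ocar A I" using isb unfolding is_basis_of_def by blast
    then show "lin_span (ostar ` B) = Ocar A I" by (simp add: lin_span_ostar OO)
  qed
  have P2: "perfect A I (ostar ` B)"
    unfolding perfect_def
  proof (intro conjI)
    show "is_basis_of (Ocar A I) (ostar ` B)" by (rule isb2)
    show "\<forall>b\<in>ostar ` B. weight_vector b" using wvB wv_ostar by blast
    show "\<forall>i\<in>I. \<forall>n. (\<forall>b\<in>ostar ` B. ell i b = n \<longrightarrow> edp i n b \<in> ostar ` B \<and> eact i (edp i n b) = (\<lambda>w. 0)) \<and>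
                 inj_on (edp i n) {b\<in>ostar ` B. ell i b = n}"
    proof (intro ballI allI, rule conjI)
    fix i n assume i: "i \<in> I"
    show "\<forall>b\<in>ostar ` B. ell i b = n \<longrightarrow> edp i n b \<in> ostar ` B \<and> eact i (edp i n b) = (\<lambda>w. 0)"
    proof (intro ballI impI conjI)
      fix b assume b: "b \<in> ostar ` B" and n: "ell i b = n"
      then obtain b0 where b0: "b0 \<in> B" "b = ostar b0" by blast
      show "edp i n b \<in> ostar ` B" using left_main[OF pol i b0(1)] n b0(2) by simp
      have "finite {w. b0 w \<noteq> 0}" using basis b0 Ocar_finite by blast
      then have fb: "finite {w. b w \<noteq> 0}" using ostar_fin b0(2) by blast
      show "eact i (edp i n b) = (\<lambda>w. 0)" using eact_edp_zero[OF fb, of i] n by simp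
    qed
    show "inj_on (edp i n) {b \<in> ostar ` B. ell i b = n}"
    proof (rule inj_onI)
      fix b b' assume b: "b \<in> {b \<in> ostar ` B. ell i b = n}" and b': "b' \<in> {b \<in> ostar ` B. ell i b = n}"
        and e: "edp i n b = edp i n b'"
      obtain b0 where b0: "b0 \<in> B" "b = ostar b0" using b by blast
      obtain b0' where b0': "b0' \<in> B" "b' = ostar b0'" using b' by blast
      have "b0 = b0'" by (rule left_inj[OF pol i b0(1) b0'(1)]) (use b b' e b0 b0' in auto)
      then show "b = b'" using b0 b0' by simp
    qed
    qed
  qed
  show ?thesis unfolding biperfect_def using P1 P2 by simp
qed


end
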